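(* Let $V$ and $W$ be groups, $r\in\mathbb N$, and let $f,g\colon\mathbb ZV\to\mathbb ZW$ be $r$-strict additive homomorphisms. Then the additive homomorphism $h\colon\mathbb ZV\to\mathbb ZW$ defined by $h(e_v)=f(e_v)g(e_v)$ ($v\in V$) is $r$-strict.
   Context: $\mathbb ZV$ is the group ring with basis $e_v$, $\Delta(V)$ its augmentation ideal, $\Delta(V)^0=\mathbb ZV$. An additive homomorphism $h\colon\mathbb ZV\to\mathbb ZW$ is $r$-strict if $h(\Delta(V)^s)\subset\Delta(W)^s$ for all $s\in\mathbb N$ with $s\le r$. *)

theory Defs
  imports "HOL-Library.Poly_Mapping"
begin

text \<open>Group ring ZV of a (not necessarily abelian) group V, written additively
  via the class group_add: finitely supported functions V to int with convolution
  product (Poly_Mapping).\<close>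

type_synonym 'v grouping = "'v \<Rightarrow>\<^sub>0 int"

definition basis_elt :: "'v \<Rightarrow> 'v grouping" ("e") where
  "basis_elt v = Poly_Mapping.single v 1"

definition augmentation :: "'v grouping \<Rightarrow> int" where
  "augmentation x = (\<Sum>v\<in>Poly_Mapping.keys x. Poly_Mapping.lookup x v)"

definition aug_ideal :: "'v::group_add grouping set" where
  "aug_ideal = {x. augmentation x = 0}"

text \<open>s-th power of the augmentation ideal: the two-sided ideal generated by all
  products of s elements of Delta(V).  For s = 0 the empty product is 1,
  so this is the whole ring.\<close>
inductive_set aug_pow :: "nat \<Rightarrow> 'v::group_add grouping set" for s :: nat where
  gen: "length xs = s \<Longrightarrow> set xs \<subseteq> aug_ideal \<Longrightarrow> prod_list xs \<in> aug_pow s"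
| zero: "0 \<in> aug_pow s"
| diff: "a \<in> aug_pow s \<Longrightarrow> b \<in> aug_pow s \<Longrightarrow> a - b \<in> aug_pow s"
| lmult: "a \<in> aug_pow s \<Longrightarrow> c * a \<in> aug_pow s"
| rmult: "a \<in> aug_pow s \<Longrightarrow> a * c \<in> aug_pow s"

definition additive_hom :: "('v grouping \<Rightarrow> 'w grouping) \<Rightarrow> bool" where
  "additive_hom h \<longleftrightarrow> (\<forall>a b. h (a + b) = h a + h b)"

definition r_strict :: "nat \<Rightarrow> ('v::group_add grouping \<Rightarrow> 'w::group_add grouping) \<Rightarrow> bool" where
  "r_strict r h \<longleftrightarrow> (\<forall>s\<le>r. h ` aug_pow s \<subseteq> aug_pow s)"

end

theory Submission
  imports Defs
begin

lemma e_mult: "e a * e b = e (a + b)"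
  by (simp add: basis_elt_def mult_single)

lemma e_zero: "e 0 = (1 :: 'v::monoid_add grouping)"
  by (simp add: basis_elt_def one_poly_mapping.abs_eq single.abs_eq)

definition gen :: "'v::group_add \<Rightarrow> 'v list \<Rightarrow> 'v grouping" where
  "gen a vs = e a * prod_list (map (\<lambda>v. e v - 1) vs)"

inductive_set Sp :: "nat \<Rightarrow> 'v::group_add grouping set" for s :: nat where
  g: "length vs = s \<Longrightarrow> gen a vs \<in> Sp s"
| z: "0 \<in> Sp s"
| d: "x \<in> Sp s \<Longrightarrow> y \<in> Sp s \<Longrightarrow> x - y \<in> Sp s"

lemma Sp_uminus: "x \<in> Sp s \<Longrightarrow> - x \<in> Sp s"
  using Sp.d[OF Sp.z, of x s] by simp

lemma Sp_add: "x \<in> Sp s \<Longrightarrow> y \<in> Sp s \<Longrightarrow> x + y \<in> Sp s"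
  using Sp.d[of x s "- y"] Sp_uminus by fastforce

lemma gen_snoc: "gen a (vs @ [v]) = gen a vs * (e v - 1)"
  by (simp add: gen_def mult.assoc)

lemma Sp_lmult_e: "x \<in> Sp s \<Longrightarrow> e b * x \<in> Sp s"
proof (induction x rule: Sp.induct)
  case (g vs a)
  have "e b * gen a vs = gen (b + a) vs" by (simp add: gen_def mult.assoc[symmetric] e_mult)
  then show ?case using g Sp.g by metis
next
  case z then show ?case by (simp add: Sp.z)
next
  case (d x1 x2) then show ?case by (simp add: right_diff_distrib Sp.d)
qed

lemma Sp_lmult: "x \<in> Sp s \<Longrightarrow> c * x \<in> Sp s"
proof -
  assume x: "x \<in> Sp s"
  have "Poly_Mapping.keys c \<subseteq> UNIV" by simp
  then show ?thesis
  proof (induction c rule: frag_induction)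
    case zero then show ?case by (simp add: Sp.z)
  next
    case (one u) then show ?case using Sp_lmult_e[OF x, of u] by (simp add: basis_elt_def)
  next
    case (diff a b) then show ?case by (simp add: left_diff_distrib Sp.d)
  qed
qed

lemma E_e: "(e v - 1) * e b = e b * (e (- b + v + b) - 1 :: 'v::group_add grouping)"
proof -
  have "b + (- b + v + b) = v + b" by (simp add: add.assoc[symmetric])
  have "(e v - 1) * e b = e (v + b) - e b"
    by (simp only: left_diff_distrib e_mult mult_1_left)
  also have "\<dots> = e (b + (- b + v + b)) - e b" by (simp only: \<open>b + (- b + v + b) = v + b\<close>)
  also have "\<dots> = e b * (e (- b + v + b) - 1)"
    by (simp only: right_diff_distrib e_mult mult_1_right)
  finally show ?thesis .
qed

lemma prod_e: "prod_list (map (\<lambda>v. e v - 1) vs) * e (b::'v::group_add)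
   = e b * prod_list (map (\<lambda>v. e v - 1) (map (\<lambda>v. - b + v + b) vs))"
proof (induction vs)
  case Nil then show ?case by simp
next
  case (Cons v vs)
  have "prod_list (map (\<lambda>v. e v - 1) (v # vs)) * e b
     = (e v - 1) * (prod_list (map (\<lambda>v. e v - 1) vs) * e b)"
    by (simp only: list.map prod_list.Cons mult.assoc)
  also have "\<dots> = ((e v - 1) * e b) * prod_list (map (\<lambda>v. e v - 1) (map (\<lambda>v. - b + v + b) vs))"
    by (simp only: Cons mult.assoc)
  also have "\<dots> = e b * prod_list (map (\<lambda>v. e v - 1) (map (\<lambda>v. - b + v + b) (v # vs)))"
    by (simp only: E_e mult.assoc list.map prod_list.Cons)
  finally show ?case .
qed

lemma gen_e: "gen a vs * e b = gen (a + b) (map (\<lambda>v. - b + v + b) vs)"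
  by (simp add: gen_def mult.assoc prod_e) (simp add: mult.assoc[symmetric] e_mult)

lemma Sp_rmult_e: "x \<in> Sp s \<Longrightarrow> x * e b \<in> Sp s"
proof (induction x rule: Sp.induct)
  case (g vs a)
  then show ?case using Sp.g[of "map (\<lambda>v. - b + v + b) vs" s "a + b"] by (simp add: gen_e)
next
  case z then show ?case by (simp add: Sp.z)
next
  case (d x1 x2) then show ?case by (simp add: left_diff_distrib Sp.d)
qed

lemma Sp_rmult: "x \<in> Sp s \<Longrightarrow> x * c \<in> Sp s"
proof -
  assume x: "x \<in> Sp s"
  have "Poly_Mapping.keys c \<subseteq> UNIV" by simp
  then show ?thesis
  proof (induction c rule: frag_induction)
    case zero then show ?case by (simp add: Sp.z)
  next
    case (one u) then show ?case using Sp_rmult_e[OF x, of u] by (simp add: basis_elt_def)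
  next
    case (diff a b) then show ?case by (simp add: right_diff_distrib Sp.d)
  qed
qed

lemma gen_gen: "gen a vs * gen b ws = gen (a + b) (map (\<lambda>v. - b + v + b) vs @ ws)"
proof -
  have "gen a vs * gen b ws = (gen a vs * e b) * prod_list (map (\<lambda>v. e v - 1) ws)"
    by (simp add: gen_def mult.assoc)
  also have "\<dots> = gen (a + b) (map (\<lambda>v. - b + v + b) vs @ ws)"
    by (simp add: gen_e) (simp add: gen_def mult.assoc)
  finally show ?thesis .
qed

lemma Sp_mult: "x \<in> Sp i \<Longrightarrow> y \<in> Sp j \<Longrightarrow> x * y \<in> Sp (i + j)"
proof (induction x rule: Sp.induct)
  case (g vs a)
  have lv: "length vs = i" by fact
  from g.prems show ?case
  proof (induction y rule: Sp.induct)
    case (g ws b)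
    have "length (map (\<lambda>v. - b + v + b) vs @ ws) = i + j" using lv g by simp
    then have "gen (a + b) (map (\<lambda>v. - b + v + b) vs @ ws) \<in> Sp (i + j)" by (rule Sp.g)
    then show ?case by (simp only: gen_gen)
  next
    case z then show ?case by (simp add: Sp.z)
  next
    case (d y1 y2)
    have "gen a vs * (y1 - y2) = gen a vs * y1 - gen a vs * y2" by (rule right_diff_distrib)
    then show ?case using d by (simp add: Sp.d)
  qed
next
  case z then show ?case by (simp add: Sp.z)
next
  case (d x1 x2)
  have "(x1 - x2) * y = x1 * y - x2 * y" by (rule left_diff_distrib)
  then show ?case using d by (simp add: Sp.d)
qed

lemma aug_sum: "finite S \<Longrightarrow> Poly_Mapping.keys x \<subseteq> S \<Longrightarrow> augmentation x = (\<Sum>v\<in>S. Poly_Mapping.lookup x v)"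
  unfolding augmentation_def
  by (rule sum.mono_neutral_left) (auto simp: in_keys_iff)

lemma aug_diff: "augmentation (x - y) = augmentation x - augmentation y"
proof -
  let ?S = "Poly_Mapping.keys x \<union> Poly_Mapping.keys y"
  have f: "finite ?S" by simp
  have k: "Poly_Mapping.keys (x - y) \<subseteq> ?S" by (auto simp: in_keys_iff lookup_minus)
  show ?thesis
    using aug_sum[OF f k] aug_sum[OF f, of x] aug_sum[OF f, of y]
    by (simp add: lookup_minus sum_subtractf)
qed

lemma aug_single: "augmentation (Poly_Mapping.single v k) = k"
  using aug_sum[of "{v}" "Poly_Mapping.single v k"] by simp

lemma E_aug: "e v - 1 \<in> (aug_ideal :: 'v::group_add grouping set)"
proof -
  have E: "e v - 1 = Poly_Mapping.single v (1::int) - Poly_Mapping.single 0 1"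
    unfolding e_zero[symmetric] basis_elt_def ..
  have "augmentation (Poly_Mapping.single v (1::int) - Poly_Mapping.single 0 1) = 0"
    by (simp only: aug_diff aug_single)
  then show ?thesis unfolding aug_ideal_def E by (rule CollectI)
qed

lemma Sp_sub_aug: "x \<in> Sp s \<Longrightarrow> x \<in> aug_pow s"
proof (induction x rule: Sp.induct)
  case (g vs a)
  have s1: "set (map (\<lambda>v. e v - 1) vs) \<subseteq> aug_ideal" using E_aug by auto
  have s2: "length (map (\<lambda>v. e v - 1) vs) = s" using g by simp
  have "prod_list (map (\<lambda>v. e v - 1) vs) \<in> aug_pow s"
    using s2 s1 by (rule aug_pow.gen)
  then show ?case unfolding gen_def by (rule aug_pow.lmult)
next
  case z then show ?case by (rule aug_pow.zero)
next
  case (d x1 x2) then show ?case by (simp add: aug_pow.diff)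
qed

lemma Sp_Suc_sub_aug: "x \<in> Sp (Suc s) \<Longrightarrow> x \<in> aug_pow s"
proof (induction x rule: Sp.induct)
  case (g vs a)
  then obtain ws v where vs: "vs = ws @ [v]" and lws: "length ws = s"
    unfolding length_Suc_conv_rev by blast
  from lws have "gen a ws \<in> Sp s" by (rule Sp.g)
  then have "gen a ws \<in> aug_pow s" by (rule Sp_sub_aug)
  then show ?case unfolding vs gen_snoc by (rule aug_pow.rmult)
next
  case z then show ?case by (rule aug_pow.zero)
next
  case (d x1 x2) then show ?case by (simp add: aug_pow.diff)
qed

lemma aug_ideal_Sp: "x \<in> aug_ideal \<Longrightarrow> x \<in> Sp 1"
proof -
  assume x: "x \<in> aug_ideal"
  have "Poly_Mapping.keys x \<subseteq> UNIV" by simp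
  then have "x - Poly_Mapping.single 0 (augmentation x) \<in> Sp 1"
  proof (induction x rule: frag_induction)
    case zero
    have "augmentation (0::'a grouping) = 0" by (simp add: augmentation_def)
    then show ?case by (simp add: Sp.z)
  next
    case (one u)
    have "gen 0 [u] \<in> Sp 1" by (rule Sp.g) simp
    moreover have "gen 0 [u] = e u - 1" by (simp add: gen_def e_zero)
    moreover have "frag_of u - Poly_Mapping.single 0 (augmentation (frag_of u)) = e u - 1"
      unfolding aug_single e_zero[symmetric] basis_elt_def ..
    ultimately show ?case by simp
  next
    case (diff a b)
    have E: "a - b - Poly_Mapping.single 0 (augmentation (a - b))
      = (a - Poly_Mapping.single 0 (augmentation a)) - (b - Poly_Mapping.single 0 (augmentation b))"
      by (simp add: aug_diff single_diff)
    from diff show ?case unfolding E by (rule Sp.d)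
  qed
  with x show ?thesis by (simp add: aug_ideal_def)
qed

lemma prod_Sp: "set xs \<subseteq> aug_ideal \<Longrightarrow> prod_list xs \<in> Sp (length xs)"
proof (induction xs)
  case Nil
  have "gen 0 [] \<in> Sp 0" by (rule Sp.g) simp
  then show ?case by (simp add: gen_def e_zero)
next
  case (Cons x xs)
  then have "x * prod_list xs \<in> Sp (1 + length xs)"
    by (intro Sp_mult aug_ideal_Sp) auto
  then show ?case by simp
qed

lemma aug_Sp: "x \<in> aug_pow s \<Longrightarrow> x \<in> Sp s"
proof (induction x rule: aug_pow.induct)
  case (gen xs) then show ?case using prod_Sp by blast
next
  case zero then show ?case by (rule Sp.z)
next
  case (diff a b) then show ?case by (simp add: Sp.d)
next
  case (lmult a c) then show ?case by (simp add: Sp_lmult)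
next
  case (rmult a c) then show ?case by (simp add: Sp_rmult)
qed

lemma aug_eq: "aug_pow s = Sp s"
  using aug_Sp Sp_sub_aug by blast

lemma aug_Suc: "x \<in> aug_pow (Suc s) \<Longrightarrow> x \<in> aug_pow s"
  using aug_Sp Sp_Suc_sub_aug by blast

lemma aug_anti: "i \<le> j \<Longrightarrow> x \<in> aug_pow j \<Longrightarrow> x \<in> aug_pow i"
proof (induction j arbitrary: x rule: dec_induct)
  case base then show ?case .
next
  case (step n) then show ?case using aug_Suc by blast
qed

lemma aug_mult: "x \<in> aug_pow i \<Longrightarrow> y \<in> aug_pow j \<Longrightarrow> x * y \<in> aug_pow (i + j)"
  by (simp add: aug_eq Sp_mult)

lemma aug_add: "x \<in> aug_pow i \<Longrightarrow> y \<in> aug_pow i \<Longrightarrow> x + y \<in> aug_pow i"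
  by (simp add: aug_eq Sp_add)

lemma add_zero: "additive_hom h \<Longrightarrow> h 0 = 0"
  unfolding additive_hom_def by (metis add.right_neutral add_left_cancel)

lemma add_diff: "additive_hom h \<Longrightarrow> h (a - b) = h a - h b"
  unfolding additive_hom_def by (metis diff_add_cancel eq_diff_eq)

lemma uniq:
  assumes "additive_hom h1" "additive_hom h2" "\<And>u. h1 (e u) = h2 (e u)"
  shows "h1 x = h2 x"
proof -
  have "Poly_Mapping.keys x \<subseteq> UNIV" by simp
  then show ?thesis
  proof (induction x rule: frag_induction)
    case zero then show ?case using assms add_zero by metis
  next
    case (one u) then show ?case using assms(3) by (simp add: basis_elt_def)
  next
    case (diff a b) then show ?case using assms add_diff by metis
  qed
qed

lemma uniq_fun:
  assumes "additive_hom h1" "additive_hom h2" "\<And>u. h1 (e u) = h2 (e u)"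
  shows "h1 = h2"
  using uniq[OF assms] by blast

definition PP :: "('v grouping \<Rightarrow> 'w::monoid_add grouping) \<Rightarrow> ('v grouping \<Rightarrow> 'w grouping) \<Rightarrow> 'v grouping \<Rightarrow> 'w grouping" where
  "PP f g = frag_extend (\<lambda>u. f (e u) * g (e u))"

lemma PP_add: "additive_hom (PP f g)"
  unfolding additive_hom_def PP_def by (simp add: frag_extend_add)

lemma PP_e: "PP f g (e u) = f (e u) * g (e u)"
  unfolding PP_def by (simp add: basis_elt_def)

definition good :: "nat \<Rightarrow> nat \<Rightarrow> ('v::group_add grouping \<Rightarrow> 'w::group_add grouping) \<Rightarrow> bool" where
  "good r k f \<longleftrightarrow> (\<forall>a vs. f (gen a vs) \<in> aug_pow (min r (k + length vs)))"

lemma main: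
  fixes f g :: "'v::group_add grouping \<Rightarrow> 'w::group_add grouping"
  assumes "additive_hom f" "additive_hom g" "good r k f" "good r l g"
  shows "PP f g (gen a vs) \<in> aug_pow (min r (k + l + length vs))"
  using assms
proof (induction vs arbitrary: f g k l a rule: rev_induct)
  case Nil
  have ga: "gen a [] = e a" by (simp add: gen_def)
  have "f (gen a []) \<in> aug_pow (min r (k + length ([]::'v list)))"
    "g (gen a []) \<in> aug_pow (min r (l + length ([]::'v list)))"
    using Nil.prems(3,4) unfolding good_def by blast+
  then have "f (e a) \<in> aug_pow (min r k)" "g (e a) \<in> aug_pow (min r l)"
    unfolding ga by simp_all
  then have "f (e a) * g (e a) \<in> aug_pow (min r k + min r l)" by (rule aug_mult)
  then have "f (e a) * g (e a) \<in> aug_pow (min r (k + l))" by (rule aug_anti[rotated]) simp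
  then show ?case by (simp add: gen_def PP_e)
next
  case (snoc v vs)
  define Df where "Df = (\<lambda>z. f (z * (e v - 1)))"
  define Dg where "Dg = (\<lambda>z. g (z * (e v - 1)))"
  have aDf: "additive_hom Df" using snoc.prems(1) unfolding Df_def additive_hom_def
    by (simp add: distrib_right)
  have aDg: "additive_hom Dg" using snoc.prems(2) unfolding Dg_def additive_hom_def
    by (simp add: distrib_right)
  have gDf: "good r (k+1) Df" unfolding good_def Df_def
  proof (intro allI)
    fix b ws
    have "f (gen b (ws @ [v])) \<in> aug_pow (min r (k + length (ws @ [v])))"
      using snoc.prems(3) unfolding good_def by blast
    then show "f (gen b ws * (e v - 1)) \<in> aug_pow (min r (k + 1 + length ws))"
      by (simp add: gen_snoc)
  qed
  have gDg: "good r (l+1) Dg" unfolding good_def Dg_def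
  proof (intro allI)
    fix b ws
    have "g (gen b (ws @ [v])) \<in> aug_pow (min r (l + length (ws @ [v])))"
      using snoc.prems(4) unfolding good_def by blast
    then show "g (gen b ws * (e v - 1)) \<in> aug_pow (min r (l + 1 + length ws))"
      by (simp add: gen_snoc)
  qed
  have keyf: "(\<lambda>z. PP f g (z * e v)) = (\<lambda>z. PP f g z + (PP Df g z + PP f Dg z + PP Df Dg z))"
  proof (rule uniq_fun)
    show "additive_hom (\<lambda>z. PP f g (z * e v))"
      unfolding additive_hom_def by (simp add: distrib_right PP_add[unfolded additive_hom_def])
    show "additive_hom (\<lambda>z. PP f g z + (PP Df g z + PP f Dg z + PP Df Dg z))"
      unfolding additive_hom_def by (simp add: algebra_simps PP_add[unfolded additive_hom_def])
    fix u
    have fe: "f (e u * e v) = f (e u) + Df (e u)" unfolding Df_def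
      using add_diff[OF snoc.prems(1)] by (simp add: right_diff_distrib)
    have ge: "g (e u * e v) = g (e u) + Dg (e u)" unfolding Dg_def
      using add_diff[OF snoc.prems(2)] by (simp add: right_diff_distrib)
    have "PP f g (e u * e v) = f (e u * e v) * g (e u * e v)"
      by (simp only: e_mult PP_e)
    then show "PP f g (e u * e v) = PP f g (e u) + (PP Df g (e u) + PP f Dg (e u) + PP Df Dg (e u))"
      by (simp add: PP_e fe ge algebra_simps)
  qed
  have key: "PP f g (z * e v) = PP f g z + (PP Df g z + PP f Dg z + PP Df Dg z)" for z
    using fun_cong[OF keyf, of z] by simp
  let ?y = "gen a vs"
  have "PP f g (gen a (vs @ [v])) = PP f g (?y * e v) - PP f g ?y"
    by (simp add: gen_snoc right_diff_distrib add_diff[OF PP_add])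
  also have "\<dots> = PP Df g ?y + PP f Dg ?y + PP Df Dg ?y" by (simp add: key)
  finally have eq: "PP f g (gen a (vs @ [v])) = PP Df g ?y + PP f Dg ?y + PP Df Dg ?y" .
  have 1: "PP Df g ?y \<in> aug_pow (min r (k + l + length (vs @ [v])))"
    using snoc.IH[OF aDf snoc.prems(2) gDf snoc.prems(4)] by simp
  have 2: "PP f Dg ?y \<in> aug_pow (min r (k + l + length (vs @ [v])))"
    using snoc.IH[OF snoc.prems(1) aDg snoc.prems(3) gDg] by simp
  have 3: "PP Df Dg ?y \<in> aug_pow (min r (k + l + length (vs @ [v])))"
    using snoc.IH[OF aDf aDg gDf gDg, of a] by (rule aug_anti[rotated]) simp
  show ?case unfolding eq by (intro aug_add 1 2 3)
qed

theorem mainTheorem7: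
  fixes f g h :: "'v::group_add grouping \<Rightarrow> 'w::group_add grouping" and r :: nat
  assumes "additive_hom f" and "r_strict r f"
    and "additive_hom g" and "r_strict r g"
    and "additive_hom h"
    and "\<And>v. h (e v) = f (e v) * g (e v)"
  shows "r_strict r h"
proof -
  have hP: "h x = PP f g x" for x
    by (rule uniq[OF assms(5) PP_add]) (simp add: assms(6) PP_e)
  have gd: "good r 0 f'" if "r_strict r f'" for f' :: "'v grouping \<Rightarrow> 'w grouping"
    unfolding good_def
  proof (intro allI)
    fix a :: 'v and vs :: "'v list"
    have "gen a vs \<in> aug_pow (length vs)" by (rule Sp_sub_aug) (simp add: Sp.g)
    then have "gen a vs \<in> aug_pow (min r (length vs))" by (rule aug_anti[rotated]) simp
    moreover have "f' ` aug_pow (min r (length vs)) \<subseteq> aug_pow (min r (length vs))"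
      using that unfolding r_strict_def by simp
    ultimately show "f' (gen a vs) \<in> aug_pow (min r (0 + length vs))"
      by auto
  qed
  show ?thesis unfolding r_strict_def
  proof (intro allI impI subsetI)
    fix s y assume s: "s \<le> r" and y: "y \<in> h ` aug_pow s"
    then obtain x where x: "x \<in> Sp s" and yx: "y = h x" by (auto simp: aug_eq)
    from x have "h x \<in> aug_pow s"
    proof (induction x rule: Sp.induct)
      case (g vs a)
      have "PP f g (gen a vs) \<in> aug_pow (min r (0 + 0 + length vs))"
        by (rule main[OF assms(1,3) gd[OF assms(2)] gd[OF assms(4)]])
      then show ?case using g s by (simp add: hP)
    next
      case z then show ?case using add_zero[OF assms(5)] by (simp add: aug_pow.zero)
    next
      case (d x1 x2) then show ?case using add_diff[OF assms(5)] by (simp add: aug_pow.diff)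
    qed
    then show "y \<in> aug_pow s" using yx by simp
  qed
qed

end
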